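(* Let $p>q\ge 0$ be integers and let $P$, $Q$ be orthogonal projections on an $N$-dimensional real inner product space with ranks $p$ and $q$ respectively. Then there exist orthogonal projections $P'$ and $Q'$ of ranks $p-1$ and $q+1$ respectively such that $P+Q=P'+Q'$. *)

theory Defs
  imports "HOL-Analysis.Analysis"
begin

definition orth_proj :: "('a::euclidean_space \<Rightarrow> 'a) \<Rightarrow> bool" where
  "orth_proj P \<longleftrightarrow> linear P \<and> P \<circ> P = P \<and> (\<forall>x y. inner (P x) y = inner x (P y))"

definition op_rank :: "('a::euclidean_space \<Rightarrow> 'a) \<Rightarrow> nat" where
  "op_rank P = dim (range P)"

end

theory Submission
  imports Defs
begin

theorem lemma2p4:
  fixes P Q :: "'a::euclidean_space \<Rightarrow> 'a" and p q :: nat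
  assumes "p > q"
    and "orth_proj P" and "op_rank P = p"
    and "orth_proj Q" and "op_rank Q = q"
  shows "\<exists>P' Q'. orth_proj P' \<and> op_rank P' = p - 1 \<and> orth_proj Q' \<and> op_rank Q' = q + 1
           \<and> (\<forall>x. P x + Q x = P' x + Q' x)"
proof -
  have linP: "linear P" and PP: "\<And>x. P (P x) = P x" and saP: "\<And>x y. inner (P x) y = inner x (P y)"
    using assms(2) unfolding orth_proj_def by (auto simp: fun_eq_iff)
  have linQ: "linear Q" and QQ: "\<And>x. Q (Q x) = Q x" and saQ: "\<And>x y. inner (Q x) y = inner x (Q y)"
    using assms(4) unfolding orth_proj_def by (auto simp: fun_eq_iff)
  define U where "U = range P"
  define V where "V = range Q"
  have sU: "subspace U" unfolding U_def using linP subspace_UNIV linear_subspace_image by blast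
  have sV: "subspace V" unfolding V_def using linQ subspace_UNIV linear_subspace_image by blast
  have dU: "dim U = p" using assms(3) unfolding U_def op_rank_def by simp
  have dV: "dim V = q" using assms(5) unfolding V_def op_rank_def by simp
  have "\<not> inj_on Q (span U)"
  proof
    assume "inj_on Q (span U)"
    then have "dim (Q ` U) = dim U" using dim_image_eq linQ by blast
    moreover have "dim (Q ` U) \<le> dim V" unfolding V_def by (intro dim_subset) auto
    ultimately show False using dU dV assms(1) by simp
  qed
  then obtain x y where xy: "x \<in> U" "y \<in> U" "x \<noteq> y" "Q x = Q y"
    using sU span_eq_iff unfolding inj_on_def by metis
  define v0 where "v0 = x - y"
  have v0U: "v0 \<in> U" using xy sU unfolding v0_def by (simp add: subspace_diff)
  have v0n: "v0 \<noteq> 0" using xy unfolding v0_def by simp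
  have Qv0: "Q v0 = 0" using xy linQ unfolding v0_def by (simp add: linear_diff)
  define v where "v = (1 / norm v0) *\<^sub>R v0"
  have vU: "v \<in> U" using v0U sU unfolding v_def by (simp add: subspace_scale)
  have Qv: "Q v = 0" using Qv0 linQ unfolding v_def by (simp add: linear_scale)
  have vv: "inner v v = 1" using v0n unfolding v_def
    by (simp add: power2_norm_eq_inner[symmetric] field_simps power2_eq_square)
  have v0': "v \<noteq> 0" using vv by auto
  have Pv: "P v = v" using vU PP unfolding U_def by auto
  have vQ: "\<And>z. inner v (Q z) = 0" using saQ Qv by (metis inner_zero_left)
  have vP: "\<And>z. inner v (P z) = inner v z" using saP Pv by metis
  define P' where "P' = (\<lambda>z. P z - inner v z *\<^sub>R v)"
  define Q' where "Q' = (\<lambda>z. Q z + inner v z *\<^sub>R v)"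
  have linP': "linear P'" unfolding P'_def
  proof (rule linearI)
    fix a b show "P (a + b) - inner v (a + b) *\<^sub>R v = (P a - inner v a *\<^sub>R v) + (P b - inner v b *\<^sub>R v)"
      by (simp add: linear_add[OF linP] inner_add_right scaleR_add_left)
  next
    fix c a show "P (c *\<^sub>R a) - inner v (c *\<^sub>R a) *\<^sub>R v = c *\<^sub>R (P a - inner v a *\<^sub>R v)"
      by (simp add: linear_scale[OF linP] scaleR_diff_right)
  qed
  have linQ': "linear Q'" unfolding Q'_def
  proof (rule linearI)
    fix a b show "Q (a + b) + inner v (a + b) *\<^sub>R v = (Q a + inner v a *\<^sub>R v) + (Q b + inner v b *\<^sub>R v)"
      by (simp add: linear_add[OF linQ] inner_add_right scaleR_add_left)
  next
    fix c a show "Q (c *\<^sub>R a) + inner v (c *\<^sub>R a) *\<^sub>R v = c *\<^sub>R (Q a + inner v a *\<^sub>R v)"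
      by (simp add: linear_scale[OF linQ] scaleR_add_right)
  qed
  have opP': "orth_proj P'" unfolding orth_proj_def
  proof (intro conjI allI)
    show "P' \<circ> P' = P'"
    proof
      fix z
      have "P (P z - inner v z *\<^sub>R v) = P z - inner v z *\<^sub>R v"
        using linP PP Pv by (simp add: linear_diff linear_scale)
      then show "(P' \<circ> P') z = P' z" unfolding P'_def using vP vv
        by (simp add: inner_diff_right algebra_simps)
    qed
    fix a b show "inner (P' a) b = inner a (P' b)" unfolding P'_def
      using saP[of a b] saP[of b a] by (simp add: inner_diff_left inner_diff_right inner_commute)
  qed (rule linP')
  have opQ': "orth_proj Q'" unfolding orth_proj_def
  proof (intro conjI allI)
    show "Q' \<circ> Q' = Q'"
    proof
      fix z
      have "Q (Q z + inner v z *\<^sub>R v) = Q z"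
        using linQ QQ Qv by (simp add: linear_add linear_scale)
      then show "(Q' \<circ> Q') z = Q' z" unfolding Q'_def using vQ vv
        by (simp add: inner_add_right algebra_simps)
    qed
    fix a b show "inner (Q' a) b = inner a (Q' b)" unfolding Q'_def
      using saQ[of a b] saQ[of b a] by (simp add: inner_add_left inner_add_right inner_commute)
  qed (rule linQ')
  have sP': "subspace (range P')" using linP' subspace_UNIV linear_subspace_image by blast
  have sQ': "subspace (range Q')" using linQ' subspace_UNIV linear_subspace_image by blast
  have sv: "subspace (span {v})" by simp
  have dv: "dim (span {v}) = 1" using v0' by simp
  have eqU: "{a + b |a b. a \<in> range P' \<and> b \<in> span {v}} = U"
  proof (intro set_eqI iffI)
    fix u assume "u \<in> {a + b |a b. a \<in> range P' \<and> b \<in> span {v}}"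
    then obtain z c where u: "u = P' z + c *\<^sub>R v" by (auto simp: span_singleton)
    have "P z \<in> U" unfolding U_def by simp
    then show "u \<in> U" unfolding u P'_def using vU sU
      by (simp add: subspace_add subspace_diff subspace_scale)
  next
    fix u assume u: "u \<in> U"
    then have "P u = u" unfolding U_def using PP by auto
    then have "u = P' u + inner v u *\<^sub>R v" unfolding P'_def by simp
    then show "u \<in> {a + b |a b. a \<in> range P' \<and> b \<in> span {v}}"
      by (metis (mono_tags, lifting) mem_Collect_eq rangeI span_base span_mul singletonI)
  qed
  have intP: "range P' \<inter> span {v} \<subseteq> {0}"
  proof
    fix u assume "u \<in> range P' \<inter> span {v}"
    then have m1: "u \<in> range P'" and m2: "u \<in> span {v}" by auto
    from m1 obtain z where u1: "u = P' z" by auto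
    from m2 obtain c where u2: "u = c *\<^sub>R v" by (auto simp: span_singleton)
    note u = u1 u2
    have "inner v (P' z) = 0" unfolding P'_def using vP vv by (simp add: inner_diff_right)
    moreover have "inner v u = c" using u2 vv by simp
    ultimately have "c = 0" using u1 by simp
    then show "u \<in> {0}" using u by simp
  qed
  have "dim (range P' \<inter> span {v}) = 0" using intP by simp
  have "dim U + dim (range P' \<inter> span {v}) = dim (range P') + 1"
    using dim_sums_Int[OF sP' sv] eqU dv by simp
  moreover note \<open>dim (range P' \<inter> span {v}) = 0\<close>
  ultimately have rP': "op_rank P' = p - 1" using dU unfolding op_rank_def by simp
  have eqV: "range Q' = {a + b |a b. a \<in> V \<and> b \<in> span {v}}"
  proof (intro set_eqI iffI)
    fix u assume "u \<in> range Q'"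
    then obtain z where "u = Q z + inner v z *\<^sub>R v" unfolding Q'_def by auto
    then show "u \<in> {a + b |a b. a \<in> V \<and> b \<in> span {v}}" unfolding V_def
      by (metis (mono_tags, lifting) mem_Collect_eq rangeI span_base span_mul singletonI)
  next
    fix u assume "u \<in> {a + b |a b. a \<in> V \<and> b \<in> span {v}}"
    then obtain z c where u: "u = Q z + c *\<^sub>R v" unfolding V_def by (auto simp: span_singleton)
    have "Q' u = u" unfolding u Q'_def using linQ QQ Qv vQ vv
      by (simp add: linear_add linear_scale inner_add_right)
    then show "u \<in> range Q'" by (metis rangeI)
  qed
  have intQ: "V \<inter> span {v} \<subseteq> {0}"
  proof
    fix u assume "u \<in> V \<inter> span {v}"
    then have m1: "u \<in> range Q" and m2: "u \<in> span {v}" unfolding V_def by auto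
    from m1 obtain z where u1: "u = Q z" by auto
    from m2 obtain c where u2: "u = c *\<^sub>R v" by (auto simp: span_singleton)
    note u = u1 u2
    have "inner v u = 0" using u vQ by simp
    moreover have "inner v u = c" using u2 vv by simp
    ultimately have "c = 0" using u1 by simp
    then show "u \<in> {0}" using u by simp
  qed
  have "dim (V \<inter> span {v}) = 0" using intQ by simp
  have "dim (range Q') + dim (V \<inter> span {v}) = dim V + 1"
    using dim_sums_Int[OF sV sv] eqV dv by simp
  moreover note \<open>dim (V \<inter> span {v}) = 0\<close>
  ultimately have rQ': "op_rank Q' = q + 1" using dV unfolding op_rank_def by simp
  have "\<forall>z. P z + Q z = P' z + Q' z" unfolding P'_def Q'_def by simp
  then show ?thesis using opP' opQ' rP' rQ' by blast
qed

end
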